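(* Let $d\ge1$, $\varepsilon>0$ and fix $T>0$. For $t\ge T$ and $x,y\in\mathbb{R}^d_\varepsilon$ the following hold, where $A\lesssim B$ for exponents means: there exist constants $C,c>0$, independent of $(t,x,y)$ in the indicated range, with $e^{-A/t}\le Ce^{-cB/t}$... more precisely, for $F,G\ge0$, "$e^{-F/t}\lesssim e^{-G/t}$" means $e^{-c_1F/t}\le Ce^{-c_2G/t}$ for some constants $C,c_1,c_2>0$, and $\asymp$ means both directions: (i) if $|x|_\rho\vee|y|_\rho>1$, then $e^{-\rho(x,y)^2/t}\asymp e^{-|x-y|^2/t}\gtrsim e^{-(|x|_\rho+|y|_\rho)^2/t}$; (ii) if $|x|_\rho\vee|y|_\rho\le1$, then $e^{-\rho(x,y)^2/t}\asymp e^{-|x-y|^2/t}\asymp e^{-(|x|_\rho+|y|_\rho)^2/t}$; (iii) for any fixed $b<1$, if $|x|_\rho>1>b\ge|y|_\rho$, then $e^{-\rho(x,y)^2/t}\asymp e^{-|x-y|^2/t}\asymp e^{-(|x|_\rho+|y|_\rho)^2/t}$.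
   Context: $\mathbb{R}^d_\varepsilon=\{x\in\mathbb{R}^d:|x|>\varepsilon\}$ (for $d=1$, $(0,\infty)$). For $x\in\mathbb{R}^d_\varepsilon$, $|x|_\rho=|x|-\varepsilon$ (for $d=1$, $|x|_\rho=|x|$), and for $x,y\in\mathbb{R}^d_\varepsilon$, $\rho(x,y)=(|x|_\rho+|y|_\rho)\wedge|x-y|$, where $a\wedge b=\min\{a,b\}$, $a\vee b=\max\{a,b\}$. The implicit constants may depend on $d,\varepsilon,T$ (and on $b$ in (iii)). *)

theory Defs
  imports "HOL-Analysis.Analysis"
begin

definition Rd_eps :: "real \<Rightarrow> (real ^ 'n::finite) set" where
  "Rd_eps eps = (if CARD('n) = 1 then {x. \<forall>i. x $ i > 0} else {x. norm x > eps})"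

definition abs_rho :: "real \<Rightarrow> real ^ 'n::finite \<Rightarrow> real" where
  "abs_rho eps x = (if CARD('n) = 1 then norm x else norm x - eps)"

definition rho :: "real \<Rightarrow> real ^ 'n::finite \<Rightarrow> real ^ 'n \<Rightarrow> real" where
  "rho eps x y = min (abs_rho eps x + abs_rho eps y) (norm (x - y))"

definition exp_lesssim :: "(real \<times> 'a \<times> 'a) set \<Rightarrow> ('a \<Rightarrow> 'a \<Rightarrow> real) \<Rightarrow> ('a \<Rightarrow> 'a \<Rightarrow> real) \<Rightarrow> bool" where
  "exp_lesssim S F G = (\<exists>C c1 c2. C > 0 \<and> c1 > 0 \<and> c2 > 0 \<and>
     (\<forall>(t, x, y) \<in> S. exp (- c1 * F x y / t) \<le> C * exp (- c2 * G x y / t)))"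

definition exp_asymp :: "(real \<times> 'a \<times> 'a) set \<Rightarrow> ('a \<Rightarrow> 'a \<Rightarrow> real) \<Rightarrow> ('a \<Rightarrow> 'a \<Rightarrow> real) \<Rightarrow> bool" where
  "exp_asymp S F G = (exp_lesssim S F G \<and> exp_lesssim S G F)"

end

theory Submission
  imports Defs
begin


lemma lesssim_intro:
  fixes S :: "(real \<times> 'a \<times> 'a) set"
  assumes T: "T > 0" and K: "K > 0" and M: "M \<ge> 0"
    and H: "\<And>t x y. (t, x, y) \<in> S \<Longrightarrow> t \<ge> T \<and> G x y \<le> K * F x y + M"
  shows "exp_lesssim S F G"
proof -
  have key: "exp (- K * F x y / t) \<le> exp (M / T) * exp (- 1 * G x y / t)"
    if "(t, x, y) \<in> S" for t x y
  proof -
    from H[OF that] have tT: "t \<ge> T" and g: "G x y \<le> K * F x y + M" by auto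
    have tp: "t > 0" using tT T by linarith
    have "(G x y - K * F x y) / t \<le> M / t" using g tp by (simp add: divide_right_mono)
    also have "M / t \<le> M / T" using M T tT by (simp add: frac_le)
    finally have "- K * F x y / t \<le> M / T + - 1 * G x y / t"
      by (simp add: diff_divide_distrib)
    then have "exp (- K * F x y / t) \<le> exp (M / T + - 1 * G x y / t)"
      by (simp only: exp_le_cancel_iff)
    then show "exp (- K * F x y / t) \<le> exp (M / T) * exp (- 1 * G x y / t)"
      by (simp only: exp_add)
  qed
  show ?thesis unfolding exp_lesssim_def
    by (intro exI[of _ "exp (M / T)"] exI[of _ K] exI[of _ 1]) (use K key in auto)
qed

lemma rho_basics:
  fixes x y :: "real ^ 'n::finite"
  assumes "eps > 0" "x \<in> Rd_eps eps" "y \<in> Rd_eps eps"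
  shows "abs_rho eps x \<ge> 0" "abs_rho eps y \<ge> 0"
    "norm (x - y) \<le> abs_rho eps x + abs_rho eps y + 2 * eps"
    "norm (x - y) \<ge> abs_rho eps x - abs_rho eps y"
proof -
  have t1: "norm (x - y) \<le> norm x + norm y" by (rule norm_triangle_ineq4)
  have t2: "norm x - norm y \<le> norm (x - y)" by (rule norm_triangle_ineq2)
  show "abs_rho eps x \<ge> 0" "abs_rho eps y \<ge> 0"
    "norm (x - y) \<le> abs_rho eps x + abs_rho eps y + 2 * eps"
    "norm (x - y) \<ge> abs_rho eps x - abs_rho eps y"
    using assms t1 t2 unfolding abs_rho_def Rd_eps_def
    by (auto split: if_splits)
qed

theorem lemma2p10:
  fixes eps T :: real
  assumes "eps > 0" and "T > 0"
  shows
    "(exp_asymp {(t, x :: real ^ 'n::finite, y). t \<ge> T \<and> x \<in> Rd_eps eps \<and> y \<in> Rd_eps eps \<and>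
                  max (abs_rho eps x) (abs_rho eps y) > 1}
        (\<lambda>x y. (rho eps x y)\<^sup>2) (\<lambda>x y. (norm (x - y))\<^sup>2)
      \<and> exp_lesssim {(t, x :: real ^ 'n, y). t \<ge> T \<and> x \<in> Rd_eps eps \<and> y \<in> Rd_eps eps \<and>
                  max (abs_rho eps x) (abs_rho eps y) > 1}
        (\<lambda>x y. (abs_rho eps x + abs_rho eps y)\<^sup>2) (\<lambda>x y. (norm (x - y))\<^sup>2))
    \<and>
     (exp_asymp {(t, x :: real ^ 'n, y). t \<ge> T \<and> x \<in> Rd_eps eps \<and> y \<in> Rd_eps eps \<and>
                  max (abs_rho eps x) (abs_rho eps y) \<le> 1}
        (\<lambda>x y. (rho eps x y)\<^sup>2) (\<lambda>x y. (norm (x - y))\<^sup>2)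
      \<and> exp_asymp {(t, x :: real ^ 'n, y). t \<ge> T \<and> x \<in> Rd_eps eps \<and> y \<in> Rd_eps eps \<and>
                  max (abs_rho eps x) (abs_rho eps y) \<le> 1}
        (\<lambda>x y. (norm (x - y))\<^sup>2) (\<lambda>x y. (abs_rho eps x + abs_rho eps y)\<^sup>2))
    \<and>
     (\<forall>b < 1.
       exp_asymp {(t, x :: real ^ 'n, y). t \<ge> T \<and> x \<in> Rd_eps eps \<and> y \<in> Rd_eps eps \<and>
                  abs_rho eps x > 1 \<and> b \<ge> abs_rho eps y}
        (\<lambda>x y. (rho eps x y)\<^sup>2) (\<lambda>x y. (norm (x - y))\<^sup>2)
      \<and> exp_asymp {(t, x :: real ^ 'n, y). t \<ge> T \<and> x \<in> Rd_eps eps \<and> y \<in> Rd_eps eps \<and>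
                  abs_rho eps x > 1 \<and> b \<ge> abs_rho eps y}
        (\<lambda>x y. (norm (x - y))\<^sup>2) (\<lambda>x y. (abs_rho eps x + abs_rho eps y)\<^sup>2))"
  proof -
  let ?R = "\<lambda>(x::real ^ 'n) y. (rho eps x y)\<^sup>2"
  let ?N = "\<lambda>(x::real ^ 'n) y. (norm (x - y))\<^sup>2"
  let ?A = "\<lambda>(x::real ^ 'n) y. (abs_rho eps x + abs_rho eps y)\<^sup>2"
  have RN: "?R x y \<le> 1 * ?N x y + 0" if "x \<in> Rd_eps eps" "y \<in> Rd_eps eps" for x y
  proof -
    have "0 \<le> rho eps x y" "rho eps x y \<le> norm (x - y)"
      using rho_basics[OF assms(1) that] unfolding rho_def by auto
    then show ?thesis by (simp add: power_mono)
  qed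
  have NA: "?N x y \<le> 2 * ?A x y + 8 * eps\<^sup>2" if "x \<in> Rd_eps eps" "y \<in> Rd_eps eps" for x y
  proof -
    note b = rho_basics[OF assms(1) that]
    have "?N x y \<le> (abs_rho eps x + abs_rho eps y + 2 * eps)\<^sup>2"
      using b by (simp add: power_mono)
    also have "\<dots> \<le> 2 * ?A x y + 8 * eps\<^sup>2"
    proof -
      have "0 \<le> (abs_rho eps x + abs_rho eps y - 2 * eps)\<^sup>2" by simp
      then show ?thesis by (simp add: power2_eq_square algebra_simps)
    qed
    finally show ?thesis .
  qed
  have NR: "?N x y \<le> 2 * ?R x y + 8 * eps\<^sup>2" if "x \<in> Rd_eps eps" "y \<in> Rd_eps eps" for x y
  proof (cases "abs_rho eps x + abs_rho eps y \<le> norm (x - y)")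
    case True
    then have "rho eps x y = abs_rho eps x + abs_rho eps y" unfolding rho_def by simp
    then show ?thesis using NA[OF that] by simp
  next
    case False
    then have "rho eps x y = norm (x - y)" unfolding rho_def by simp
    then show ?thesis by (simp add: zero_le_mult_iff)
  qed
  have AN1: "?A x y \<le> 1 * ?N x y + 4" if "x \<in> Rd_eps eps" "y \<in> Rd_eps eps"
    "max (abs_rho eps x) (abs_rho eps y) \<le> 1" for x y
  proof -
    note b = rho_basics[OF assms(1) that(1,2)]
    have "abs_rho eps x + abs_rho eps y \<le> 2" using that(3) by simp
    then have "?A x y \<le> 2\<^sup>2" using b by (intro power_mono) auto
    then have "?A x y \<le> 4" by simp
    then show ?thesis using zero_le_power2[of "norm (x - y)"] by linarith
  qed
  have AN2: "?A x y \<le> 2 * ?N x y + 8 * b\<^sup>2" if "x \<in> Rd_eps eps" "y \<in> Rd_eps eps"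
    "abs_rho eps x > 1" "b \<ge> abs_rho eps y" for x y and b :: real
  proof -
    note bb = rho_basics[OF assms(1) that(1,2)]
    have "abs_rho eps x + abs_rho eps y \<le> norm (x - y) + 2 * b"
      using bb that by linarith
    moreover have "0 \<le> abs_rho eps x + abs_rho eps y" using bb by simp
    ultimately have "?A x y \<le> (norm (x - y) + 2 * b)\<^sup>2" by (simp add: power_mono)
    also have "\<dots> \<le> 2 * ?N x y + 8 * b\<^sup>2"
    proof -
      have "0 \<le> (norm (x - y) - 2 * b)\<^sup>2" by simp
      then show ?thesis by (simp add: power2_eq_square algebra_simps)
    qed
    finally show ?thesis .
  qed
  have sq: "8 * eps\<^sup>2 \<ge> 0" "\<And>b::real. 8 * b\<^sup>2 \<ge> 0" by simp_all
  show ?thesis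
    unfolding exp_asymp_def
    apply (intro conjI allI impI)
    apply (rule lesssim_intro[OF assms(2), of 2 "8 * eps\<^sup>2"], simp_all, (use NR in auto))
    apply (rule lesssim_intro[OF assms(2), of 1 "0"], simp_all, (use RN in auto))
    apply (rule lesssim_intro[OF assms(2), of 2 "8 * eps\<^sup>2"], simp_all, (use NA in auto))
    apply (rule lesssim_intro[OF assms(2), of 2 "8 * eps\<^sup>2"], simp_all, (use NR in auto))
    apply (rule lesssim_intro[OF assms(2), of 1 "0"], simp_all, (use RN in auto))
    apply (rule lesssim_intro[OF assms(2), of 1 "4"], simp_all, (use AN1 in auto))
    apply (rule lesssim_intro[OF assms(2), of 2 "8 * eps\<^sup>2"], simp_all, (use NA in auto))
    apply (rule lesssim_intro[OF assms(2), of 2 "8 * eps\<^sup>2"], simp_all, (use NR in auto))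
    apply (rule lesssim_intro[OF assms(2), of 1 "0"], simp_all, (use RN in auto))
    subgoal for b by (rule lesssim_intro[OF assms(2), of 2 "8 * b\<^sup>2"], simp_all, (use AN2 in auto))
    subgoal for b
      apply (rule lesssim_intro[OF assms(2), of 2 "8 * eps\<^sup>2"])
        apply simp
       apply simp
      using NA by auto
    done
qed

end
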